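(* Let $\beta\in(0,\tfrac12)$. Then the systems $\mathcal S=\{\sin(n+\beta)t\}_{n\in\mathbb Z}$ and $\mathcal C=\{\cos(n+\beta)t\}_{n\in\mathbb Z}$ are complete in $L_2(0,2\pi)$. *)

theory Defs
  imports "HOL-Analysis.Analysis"
begin

definition L2_02pi :: "(real \<Rightarrow> complex) \<Rightarrow> bool" where
  "L2_02pi f \<longleftrightarrow>
     f \<in> borel_measurable (lebesgue_on {0<..<2*pi}) \<and>
     integrable (lebesgue_on {0<..<2*pi}) (\<lambda>t. (norm (f t))^2)"

definition complete_L2_02pi :: "(int \<Rightarrow> real \<Rightarrow> complex) \<Rightarrow> bool" where
  "complete_L2_02pi \<phi> \<longleftrightarrow>
     (\<forall>f. L2_02pi f \<longrightarrow>
        (\<forall>\<epsilon>>0. \<exists>F c. finite F \<and>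
           (\<integral>t. (norm (f t - (\<Sum>n\<in>F. c n * \<phi> n t)))^2 \<partial>(lebesgue_on {0<..<2*pi})) < \<epsilon>))"

end

theory Submission
  imports Defs
begin


definition ee :: "int \<Rightarrow> real \<Rightarrow> complex" where
  "ee n t = exp (\<i> * complex_of_real (of_int n * t))"

inductive TP :: "(real \<Rightarrow> complex) \<Rightarrow> bool" where
  TPm: "TP (\<lambda>t. c * ee n t)"
| TPa: "TP p \<Longrightarrow> TP q \<Longrightarrow> TP (\<lambda>t. p t + q t)"

lemma ee_mult: "ee n t * ee m t = ee (n + m) t"
  unfolding ee_def exp_add[symmetric] by (simp add: algebra_simps)

lemma TP_mult_m: "TP q \<Longrightarrow> TP (\<lambda>t. (c * ee n t) * q t)"
proof (induction rule: TP.induct)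
  case (TPm d m)
  have "TP (\<lambda>t. (c * d) * ee (n + m) t)" by (rule TP.TPm)
  then show ?case by (simp add: ee_mult[symmetric] mult_ac)
next
  case (TPa p q)
  then show ?case using TP.TPa[OF TPa.IH] by (simp add: distrib_left)
qed

lemma TP_mult: "TP p \<Longrightarrow> TP q \<Longrightarrow> TP (\<lambda>t. p t * q t)"
proof (induction rule: TP.induct)
  case (TPm c n)
  then show ?case by (rule TP_mult_m)
next
  case (TPa p1 p2)
  then show ?case using TP.TPa[OF TPa.IH] by (simp add: distrib_right)
qed

lemma TP_const: "TP (\<lambda>t. c)"
  using TPm[of c 0] by (simp add: ee_def)

lemma TP_scale: "TP p \<Longrightarrow> TP (\<lambda>t. a * p t)"
  using TP_mult[OF TP_const] .

lemma TP_cos: "TP (\<lambda>t. complex_of_real (cos t))"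
proof -
  have "TP (\<lambda>t. (1/2) * ee 1 t + (1/2) * ee (-1) t)" by (intro TPa TPm)
  moreover have "(1/2) * ee 1 t + (1/2) * ee (-1) t = complex_of_real (cos t)" for t
    unfolding ee_def cos_of_real[symmetric] cos_exp_eq by (simp add: field_simps)
  ultimately show ?thesis by simp
qed

lemma TP_sin: "TP (\<lambda>t. complex_of_real (sin t))"
proof -
  have "TP (\<lambda>t. (1/(2*\<i>)) * ee 1 t + (-1/(2*\<i>)) * ee (-1) t)" by (intro TPa TPm)
  moreover have "(1/(2*\<i>)) * ee 1 t + (-1/(2*\<i>)) * ee (-1) t = complex_of_real (sin t)" for t
    unfolding ee_def sin_of_real[symmetric] sin_exp_eq by (simp add: field_simps)
  ultimately show ?thesis by simp
qed

lemma bl_decomp: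
  assumes "bounded_linear r"
  shows "r z = Re z * r 1 + Im z * r \<i>"
proof -
  interpret bounded_linear r by fact
  have "z = Re z *\<^sub>R 1 + Im z *\<^sub>R \<i>" by (simp add: complex_eq_iff)
  then have "r z = r (Re z *\<^sub>R 1 + Im z *\<^sub>R \<i>)" by simp
  also have "\<dots> = Re z * r 1 + Im z * r \<i>" by (simp add: add scaleR)
  finally show ?thesis .
qed

lemma TP_poly:
  "real_polynomial_function r \<Longrightarrow> TP (\<lambda>t. complex_of_real (r (exp (\<i> * complex_of_real t))))"
proof (induction rule: real_polynomial_function.induct)
  case (linear r)
  have "TP (\<lambda>t. complex_of_real (r 1) * complex_of_real (cos t) + complex_of_real (r \<i>) * complex_of_real (sin t))"
    by (intro TPa TP_scale TP_cos TP_sin)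
  moreover have "complex_of_real (r (exp (\<i> * complex_of_real t)))
      = complex_of_real (r 1) * complex_of_real (cos t) + complex_of_real (r \<i>) * complex_of_real (sin t)" for t
    using bl_decomp[OF linear, of "exp (\<i> * complex_of_real t)"] by (simp add: Re_exp Im_exp mult_ac)
  ultimately show ?case by simp
next
  case (const c)
  then show ?case by (rule TP_const)
next
  case (add f g)
  then show ?case using TPa[OF add.IH] by simp
next
  case (mult f g)
  then show ?case using TP_mult[OF mult.IH] by simp
qed

lemma TP_polyc:
  assumes "polynomial_function q"
  shows "TP (\<lambda>t. q (exp (\<i> * complex_of_real t)))"
proof -
  have "real_polynomial_function (Re \<circ> q)" "real_polynomial_function (Im \<circ> q)"
    using assms unfolding polynomial_function_def by (auto intro: bounded_linear_Re bounded_linear_Im)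
  then have "TP (\<lambda>t. complex_of_real ((Re \<circ> q) (exp (\<i> * complex_of_real t))) + \<i> * complex_of_real ((Im \<circ> q) (exp (\<i> * complex_of_real t))))"
    by (intro TPa TP_scale TP_poly)
  moreover have "complex_of_real ((Re \<circ> q) z) + \<i> * complex_of_real ((Im \<circ> q) z) = q z" for z
    by (simp add: complex_eq_iff)
  ultimately show ?thesis by simp
qed

lemma TP_extract: "TP p \<Longrightarrow> \<exists>F c. finite F \<and> (\<forall>t. p t = (\<Sum>n\<in>F. c n * ee n t))"
proof (induction rule: TP.induct)
  case (TPm c n)
  show ?case by (rule exI[of _ "{n}"], rule exI[of _ "\<lambda>_. c"]) simp
next
  case (TPa p q)
  from TPa.IH obtain F1 c1 F2 c2 where F: "finite F1" "finite F2"
    and p: "\<forall>t. p t = (\<Sum>n\<in>F1. c1 n * ee n t)" and q: "\<forall>t. q t = (\<Sum>n\<in>F2. c2 n * ee n t)"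
    by blast
  define c where "c n = (if n \<in> F1 then c1 n else 0) + (if n \<in> F2 then c2 n else 0)" for n
  have "(\<Sum>n\<in>F1 \<union> F2. c n * ee n t) = p t + q t" for t
  proof -
    have "(\<Sum>n\<in>F1 \<union> F2. c n * ee n t)
       = (\<Sum>n\<in>F1 \<union> F2. if n \<in> F1 then c1 n * ee n t else 0) + (\<Sum>n\<in>F1 \<union> F2. if n \<in> F2 then c2 n * ee n t else 0)"
      unfolding sum.distrib[symmetric] by (rule sum.cong) (auto simp: c_def algebra_simps)
    also have "\<dots> = (\<Sum>n\<in>F1. c1 n * ee n t) + (\<Sum>n\<in>F2. c2 n * ee n t)"
      using F sum.inter_restrict[of "F1 \<union> F2" "\<lambda>n. c1 n * ee n t" F1] sum.inter_restrict[of "F1 \<union> F2" "\<lambda>n. c2 n * ee n t" F2]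
      by (simp add: Int_absorb1 Int_absorb2 Int_commute)
    finally show ?thesis using p q by simp
  qed
  then show ?case using F by (intro exI[of _ "F1 \<union> F2"] exI[of _ c]) auto
qed



lemma Arg2pi_Arg: "Arg2pi z = (if 0 \<le> Arg z then Arg z else Arg z + 2*pi)"
proof (cases "z = 0")
  case True then show ?thesis by (simp add: Arg_zero)
next
  case False
  have e: "exp (\<i> * complex_of_real (Arg z + 2*pi)) = exp (\<i> * complex_of_real (Arg z))"
    by (simp add: algebra_simps exp_add)
  show ?thesis
  proof (rule Arg2pi_unique[of "norm z"])
    show "complex_of_real (cmod z) * exp (\<i> * complex_of_real (if 0 \<le> Arg z then Arg z else Arg z + 2 * pi)) = z"
      using Arg_eq[OF False] e by auto
    show "0 < cmod z" using False by simp
    show "0 \<le> (if 0 \<le> Arg z then Arg z else Arg z + 2 * pi)" using mpi_less_Arg[of z] by auto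
    show "(if 0 \<le> Arg z then Arg z else Arg z + 2 * pi) < 2 * pi" using Arg_le_pi[of z] mpi_less_Arg[of z] by auto
  qed
qed

lemma exp_i_shift: "exp (\<i> * complex_of_real (t - 2*pi)) = exp (\<i> * complex_of_real t)"
  by (simp add: algebra_simps exp_diff)

lemma trig_approx:
  fixes g :: "real \<Rightarrow> complex"
  assumes gc: "continuous_on UNIV g" and a: "0 < a" and b: "b < 2*pi"
    and supp: "\<And>t. t \<notin> {a..b} \<Longrightarrow> g t = 0" and d: "0 < \<delta>"
  shows "\<exists>p. TP p \<and> (\<forall>t\<in>{0<..<2*pi}. cmod (g t - p t) < \<delta>)"
proof -
  define h where "h z = g (Arg z) + g (Arg z + 2*pi)" for z
  define k where "k z = g (Arg2pi z) + g (Arg2pi z - 2*pi)" for z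
  have hk: "h = k"
  proof
    fix z
    show "h z = k z"
    proof (cases "0 \<le> Arg z")
      case True
      have "g (Arg z + 2*pi) = 0" using True b by (intro supp) auto
      moreover have "Arg z - 2*pi < a" using Arg_le_pi[of z] a pi_gt_zero by linarith
      hence "g (Arg z - 2*pi) = 0" by (intro supp) auto
      ultimately show ?thesis using True unfolding h_def k_def Arg2pi_Arg by simp
    next
      case False
      then show ?thesis unfolding h_def k_def Arg2pi_Arg by simp
    qed
  qed
  have gi: "isCont g x" for x using gc by (simp add: continuous_on_eq_continuous_at)
  have hc: "isCont h z" if z: "z \<in> sphere 0 1" for z
  proof (cases "z \<in> \<real>\<^sub>\<le>\<^sub>0")
    case False
    have A: "isCont Arg z" by (rule continuous_at_Arg[OF False])
    have "isCont (\<lambda>w. g (Arg w)) z" by (rule isCont_o2[OF A gi])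
    moreover have "isCont (\<lambda>w. g (Arg w + 2*pi)) z"
      by (rule isCont_o2[OF _ gi]) (intro continuous_intros A)
    ultimately show ?thesis unfolding h_def by (intro continuous_intros)
  next
    case True
    have "z \<noteq> 0" using z by auto
    hence nz: "z \<notin> \<real>\<^sub>\<ge>\<^sub>0" using True
      by (auto simp: complex_nonpos_Reals_iff complex_nonneg_Reals_iff complex_eq_iff)
    have A: "isCont Arg2pi z" by (rule continuous_at_Arg2pi[OF nz])
    have "isCont (\<lambda>w. g (Arg2pi w)) z" by (rule isCont_o2[OF A gi])
    moreover have "isCont (\<lambda>w. g (Arg2pi w - 2*pi)) z"
      by (rule isCont_o2[OF _ gi]) (intro continuous_intros A)
    ultimately have "isCont k z" unfolding k_def by (intro continuous_intros)
    then show ?thesis using hk by simp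
  qed
  have "continuous_on (sphere 0 1) h"
    by (intro continuous_at_imp_continuous_on ballI hc)
  from Stone_Weierstrass_polynomial_function[OF compact_sphere this d]
  obtain q where q: "polynomial_function q" and qa: "\<forall>x\<in>sphere 0 1. cmod (h x - q x) < \<delta>"
    by blast
  define p where "p t = q (exp (\<i> * complex_of_real t))" for t
  have TPp: "TP p" unfolding p_def by (rule TP_polyc[OF q])
  have pa: "cmod (g t - p t) < \<delta>" if t: "t \<in> {0<..<2*pi}" for t
  proof -
    have hg: "h (exp (\<i> * complex_of_real t)) = g t"
    proof (cases "t \<le> pi")
      case True
      have "Arg (exp (\<i> * complex_of_real t)) = t"
        using True t pi_gt_zero by (subst Arg_exp) simp_all
      moreover have "g (t + 2*pi) = 0" using t b by (intro supp) auto
      ultimately show ?thesis unfolding h_def by simp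
    next
      case False
      have "Arg (exp (\<i> * complex_of_real t)) = t - 2*pi"
        using False t Arg_exp[of "\<i> * complex_of_real (t - 2*pi)"] by (simp only: exp_i_shift) simp
      moreover have "g (t - 2*pi) = 0" using t a by (intro supp) auto
      ultimately show ?thesis unfolding h_def by simp
    qed
    have "exp (\<i> * complex_of_real t) \<in> sphere 0 1" by (simp add: norm_exp_i_times)
    hence "cmod (h (exp (\<i> * complex_of_real t)) - q (exp (\<i> * complex_of_real t))) < \<delta>" using qa by blast
    thus ?thesis unfolding p_def hg .
  qed
  show ?thesis by (rule exI[of _ p]) (use TPp pa in simp)
qed



abbreviation S0 :: "real set" where "S0 \<equiv> {0<..<2*pi}"
abbreviation M0 where "M0 \<equiv> lebesgue_on S0"

definition Nrm :: "(real \<Rightarrow> complex) \<Rightarrow> ennreal" where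
  "Nrm h = (\<integral>\<^sup>+t. ennreal ((cmod (h t))\<^sup>2) \<partial>M0)"

lemma S0_sets[simp]: "S0 \<in> sets lebesgue" by simp

lemma nrm_integral:
  assumes "h \<in> borel_measurable M0"
  shows "(\<integral>t. (cmod (h t))\<^sup>2 \<partial>M0) = enn2real (Nrm h)"
  unfolding Nrm_def using assms by (intro integral_eq_nn_integral) auto

lemma enn2real_lt: "X < ennreal e \<Longrightarrow> 0 < e \<Longrightarrow> enn2real X < e"
  using enn2real_less_iff order_less_le_trans top_greatest by blast

lemma sq_tri: "(cmod (a + b))\<^sup>2 \<le> 2 * (cmod a)\<^sup>2 + 2 * (cmod b)\<^sup>2"
proof -
  have "cmod (a+b) \<le> cmod a + cmod b" by (rule norm_triangle_ineq)
  hence "(cmod (a + b))\<^sup>2 \<le> (cmod a + cmod b)\<^sup>2" by (simp add: power_mono)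
  also have "\<dots> \<le> 2 * (cmod a)\<^sup>2 + 2 * (cmod b)\<^sup>2"
    using zero_le_power2[of "cmod a - cmod b"] by (simp add: power2_eq_square algebra_simps)
  finally show ?thesis .
qed

lemma ennreal_2x: "0 \<le> A \<Longrightarrow> 0 \<le> B \<Longrightarrow> 2 * ennreal A + 2 * ennreal B = ennreal (2*A + 2*B)"
  by (simp add: ennreal_plus ennreal_mult)

lemma nrm_tri:
  assumes [measurable]: "f \<in> borel_measurable M0" "g \<in> borel_measurable M0" "h \<in> borel_measurable M0"
  shows "Nrm (\<lambda>t. f t - h t) \<le> 2 * Nrm (\<lambda>t. f t - g t) + 2 * Nrm (\<lambda>t. g t - h t)"
proof -
  have "Nrm (\<lambda>t. f t - h t) \<le> (\<integral>\<^sup>+t. 2 * ennreal ((cmod (f t - g t))\<^sup>2) + 2 * ennreal ((cmod (g t - h t))\<^sup>2) \<partial>M0)"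
    unfolding Nrm_def
  proof (rule nn_integral_mono)
    fix t
    have "(cmod (f t - h t))\<^sup>2 \<le> 2 * (cmod (f t - g t))\<^sup>2 + 2 * (cmod (g t - h t))\<^sup>2"
      using sq_tri[of "f t - g t" "g t - h t"] by simp
    hence "ennreal ((cmod (f t - h t))\<^sup>2) \<le> ennreal (2 * (cmod (f t - g t))\<^sup>2 + 2 * (cmod (g t - h t))\<^sup>2)"
      by (rule ennreal_leI)
    also have "\<dots> = 2 * ennreal ((cmod (f t - g t))\<^sup>2) + 2 * ennreal ((cmod (g t - h t))\<^sup>2)"
      by (rule ennreal_2x[symmetric]) simp_all
    finally show "ennreal ((cmod (f t - h t))\<^sup>2) \<le> 2 * ennreal ((cmod (f t - g t))\<^sup>2) + 2 * ennreal ((cmod (g t - h t))\<^sup>2)" .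
  qed
  also have "\<dots> = 2 * Nrm (\<lambda>t. f t - g t) + 2 * Nrm (\<lambda>t. g t - h t)"
    unfolding Nrm_def by (subst nn_integral_add) (auto simp: nn_integral_cmult)
  finally show ?thesis .
qed

lemma refl_meas_map: "(\<lambda>t::real. 2*pi - t) \<in> M0 \<rightarrow>\<^sub>M M0"
proof -
  have "(\<lambda>x::real. 2*pi + (\<Sum>j\<in>Basis. ((-1) * (x \<bullet> j)) *\<^sub>R j)) \<in> lebesgue \<rightarrow>\<^sub>M lebesgue"
    by (rule lebesgue_affine_measurable) simp
  moreover have "(\<lambda>x::real. 2*pi + (\<Sum>j\<in>Basis. ((-1) * (x \<bullet> j)) *\<^sub>R j)) = (\<lambda>t. 2*pi - t)"
    by auto
  ultimately have "(\<lambda>t::real. 2*pi - t) \<in> lebesgue \<rightarrow>\<^sub>M lebesgue" by simp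
  then show ?thesis by (rule measurable_restrict_space3) auto
qed

lemma refl_meas:
  assumes "h \<in> borel_measurable M0"
  shows "(\<lambda>t. h (2*pi - t)) \<in> borel_measurable M0"
  using measurable_compose[OF refl_meas_map assms] by (simp add: o_def)

lemma refl_nrm:
  assumes h: "h \<in> borel_measurable M0"
  shows "Nrm (\<lambda>t. h (2*pi - t)) = Nrm h"
proof -
  let ?f = "\<lambda>x. ennreal ((cmod (h x))\<^sup>2) * indicator S0 x"
  have fm: "?f \<in> borel_measurable lebesgue"
    using borel_measurable_restrict_space_iff_ennreal[of S0 lebesgue "\<lambda>x. ennreal ((cmod (h x))\<^sup>2)"] h
    by simp
  have "Nrm h = (\<integral>\<^sup>+x. ?f x \<partial>lebesgue)"
    unfolding Nrm_def by (subst nn_integral_restrict_space) auto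
  also have "\<dots> = ennreal \<bar>-1\<bar> * (\<integral>\<^sup>+x. ?f (2*pi + (-1) * x) \<partial>lebesgue)"
    by (rule nn_integral_real_affine_lebesgue[OF fm]) simp
  also have "\<dots> = (\<integral>\<^sup>+x. ?f (2*pi + (-1) * x) \<partial>lebesgue)"
    by simp
  also have "\<dots> = (\<integral>\<^sup>+x. ennreal ((cmod (h (2*pi - x)))\<^sup>2) * indicator S0 x \<partial>lebesgue)"
    by (intro nn_integral_cong) (auto simp: indicator_def)
  also have "\<dots> = Nrm (\<lambda>t. h (2*pi - t))"
    unfolding Nrm_def by (subst nn_integral_restrict_space) auto
  finally show ?thesis by simp
qed

lemma L2_iff: "L2_02pi f \<longleftrightarrow> f \<in> borel_measurable M0 \<and> Nrm f < \<infinity>"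
proof -
  have "integrable M0 (\<lambda>t. (cmod (f t))\<^sup>2) \<longleftrightarrow> (\<lambda>t. (cmod (f t))\<^sup>2) \<in> borel_measurable M0 \<and> Nrm f < \<infinity>"
    unfolding integrable_iff_bounded Nrm_def by simp
  moreover have "(\<lambda>t. (cmod (f t))\<^sup>2) \<in> borel_measurable M0" if [measurable]: "f \<in> borel_measurable M0"
    by measurable
  ultimately show ?thesis unfolding L2_02pi_def by blast
qed

lemma nrm_add:
  assumes [measurable]: "x \<in> borel_measurable M0" "y \<in> borel_measurable M0"
  shows "Nrm (\<lambda>t. x t + y t) \<le> 2 * Nrm x + 2 * Nrm y"
proof -
  have "Nrm (\<lambda>t. x t - (- y t)) \<le> 2 * Nrm (\<lambda>t. x t - 0) + 2 * Nrm (\<lambda>t. 0 - (- y t))"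
    by (rule nrm_tri) measurable
  then show ?thesis by simp
qed

lemma nrm_scale: "x \<in> borel_measurable M0 \<Longrightarrow> Nrm (\<lambda>t. a * x t) = ennreal ((cmod a)\<^sup>2) * Nrm x"
  unfolding Nrm_def
  by (subst nn_integral_cmult[symmetric]) (auto simp: norm_mult power_mult_distrib ennreal_mult)

lemma cont_meas: "continuous_on UNIV h \<Longrightarrow> h \<in> borel_measurable M0"
  by (rule continuous_imp_measurable_on_sets_lebesgue) (auto intro: continuous_on_subset)

lemma refl_system:
  fixes u :: "int \<Rightarrow> real \<Rightarrow> complex" and s k :: complex
  assumes usys: "\<And>f e. L2_02pi f \<Longrightarrow> e > 0 \<Longrightarrow>
      \<exists>F c. finite F \<and> Nrm (\<lambda>t. f t - (\<Sum>n\<in>F. c n * u n t)) < ennreal e"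
    and ucont: "\<And>n. continuous_on UNIV (u n)"
    and s1: "cmod s = 1" and s2: "s\<^sup>2 \<noteq> 1" and k: "k \<noteq> 0"
    and psi: "\<And>n t. \<psi> n t = (u n t + s * u n (2*pi - t)) / k"
  shows "complete_L2_02pi \<psi>"
  unfolding complete_L2_02pi_def
proof (intro allI impI)
  fix f :: "real \<Rightarrow> complex" and e :: real
  assume fL2: "L2_02pi f" and e: "0 < e"
  have fm[measurable]: "f \<in> borel_measurable M0" and fN: "Nrm f < \<infinity>" using fL2 L2_iff by auto
  have rfm[measurable]: "(\<lambda>t. f (2*pi - t)) \<in> borel_measurable M0" by (rule refl_meas[OF fm])
  have nz: "1 - s\<^sup>2 \<noteq> 0" using s2 by simp
  define a where "a = 1 / (1 - s\<^sup>2)"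
  define b where "b = - s / (1 - s\<^sup>2)"
  define g where "g t = a * f t + b * f (2*pi - t)" for t
  have gm[measurable]: "g \<in> borel_measurable M0" unfolding g_def by measurable
  have "Nrm g \<le> 2 * Nrm (\<lambda>t. a * f t) + 2 * Nrm (\<lambda>t. b * f (2*pi - t))"
    unfolding g_def by (rule nrm_add) measurable
  also have "\<dots> = 2 * (ennreal ((cmod a)\<^sup>2) * Nrm f) + 2 * (ennreal ((cmod b)\<^sup>2) * Nrm f)"
    by (simp add: nrm_scale refl_nrm[OF fm] rfm)
  also have "\<dots> < \<infinity>" using fN by (simp add: ennreal_mult_less_top)
  finally have "Nrm g < \<infinity>" .
  hence gL2: "L2_02pi g" using L2_iff gm by blast
  from usys[OF gL2, of "e/4"] e obtain F c where F: "finite F"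
    and gp: "Nrm (\<lambda>t. g t - (\<Sum>n\<in>F. c n * u n t)) < ennreal (e/4)" by auto
  define p where "p t = (\<Sum>n\<in>F. c n * u n t)" for t
  have um[measurable]: "u n \<in> borel_measurable M0" for n using cont_meas[OF ucont] .
  have pm[measurable]: "p \<in> borel_measurable M0" unfolding p_def by measurable
  have dm[measurable]: "(\<lambda>t. g t - p t) \<in> borel_measurable M0" by measurable
  have rdm[measurable]: "(\<lambda>t. g (2*pi - t) - p (2*pi - t)) \<in> borel_measurable M0"
    using refl_meas[OF dm] by simp
  define c' where "c' n = k * c n" for n
  have sumeq: "(\<Sum>n\<in>F. c' n * \<psi> n t) = p t + s * p (2*pi - t)" for t
  proof -
    have "c' n * \<psi> n t = c n * u n t + s * (c n * u n (2*pi - t))" for n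
      using k by (simp add: c'_def psi field_simps)
    then show ?thesis unfolding p_def by (simp add: sum.distrib sum_distrib_left)
  qed
  have feq: "f t = g t + s * g (2*pi - t)" for t
  proof -
    have 1: "a + s * b = 1" unfolding a_def b_def using nz by (simp add: field_simps power2_eq_square)
    have 2: "b + s * a = 0" unfolding a_def b_def using nz by (simp add: field_simps)
    have "g t + s * g (2*pi - t) = (a + s * b) * f t + (b + s * a) * f (2*pi - t)"
      unfolding g_def by (simp add: algebra_simps)
    then show ?thesis using 1 2 by simp
  qed
  have diffeq: "f t - (\<Sum>n\<in>F. c' n * \<psi> n t) = (g t - p t) + s * (g (2*pi - t) - p (2*pi - t))" for t
    by (simp add: sumeq feq algebra_simps)
  have "Nrm (\<lambda>t. f t - (\<Sum>n\<in>F. c' n * \<psi> n t))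
      \<le> 2 * Nrm (\<lambda>t. g t - p t) + 2 * Nrm (\<lambda>t. s * (g (2*pi - t) - p (2*pi - t)))"
    unfolding diffeq by (rule nrm_add) measurable
  also have "\<dots> = 4 * Nrm (\<lambda>t. g t - p t)"
    using refl_nrm[OF dm] by (simp add: nrm_scale[OF rdm] s1 flip: distrib_right)
  also have "\<dots> < 4 * ennreal (e/4)"
    using gp unfolding p_def by (simp add: ennreal_mult_strict_left_mono)
  also have "\<dots> = ennreal e" using e by (simp flip: ennreal_numeral add: ennreal_mult[symmetric])
  finally have lt: "Nrm (\<lambda>t. f t - (\<Sum>n\<in>F. c' n * \<psi> n t)) < ennreal e" .
  have psim[measurable]: "\<psi> n \<in> borel_measurable M0" for n
  proof -
    have "\<psi> n = (\<lambda>t. (u n t + s * u n (2*pi - t)) / k)" using psi by auto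
    moreover have "(\<lambda>t. u n (2*pi - t)) \<in> borel_measurable M0" by (rule refl_meas) simp
    ultimately show ?thesis by simp
  qed
  have "(\<integral>t. (cmod (f t - (\<Sum>n\<in>F. c' n * \<psi> n t)))\<^sup>2 \<partial>M0) < e"
    by (subst nrm_integral) (measurable, rule enn2real_lt[OF lt e])
  then show "\<exists>F c. finite F \<and> (\<integral>t. (cmod (f t - (\<Sum>n\<in>F. c n * \<psi> n t)))\<^sup>2 \<partial>M0) < e"
    using F by blast
qed

lemma sup_bound:
  assumes "\<And>t. t \<in> S0 \<Longrightarrow> cmod (h t) \<le> \<delta>"
  shows "Nrm h \<le> ennreal (\<delta>\<^sup>2 * (2*pi))"
proof -
  have "Nrm h \<le> (\<integral>\<^sup>+t. ennreal (\<delta>\<^sup>2) \<partial>M0)"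
    unfolding Nrm_def
  proof (rule nn_integral_mono)
    fix t assume "t \<in> space M0"
    hence "t \<in> S0" by simp
    hence "cmod (h t) \<le> \<delta>" by (rule assms)
    hence "(cmod (h t))\<^sup>2 \<le> \<delta>\<^sup>2" by (simp add: power_mono)
    thus "ennreal ((cmod (h t))\<^sup>2) \<le> ennreal (\<delta>\<^sup>2)" by (rule ennreal_leI)
  qed
  also have "\<dots> = ennreal (\<delta>\<^sup>2) * emeasure M0 (space M0)" by simp
  also have "emeasure M0 (space M0) = ennreal (2*pi)"
    by (simp add: emeasure_restrict_space)
  finally show ?thesis by (simp add: ennreal_mult')
qed



definition clip :: "real \<Rightarrow> complex \<Rightarrow> complex" where
  "clip K z = (K / max K (cmod z)) *\<^sub>R z"

lemma clip_norm: "0 < K \<Longrightarrow> cmod (clip K z) \<le> K"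
proof -
  assume K: "0 < K"
  have m: "0 < max K (cmod z)" using K by simp
  have "cmod (clip K z) = K * cmod z / max K (cmod z)"
    unfolding clip_def using K m by (simp add: abs_of_pos)
  also have "\<dots> \<le> K" using K m by (simp add: divide_le_eq mult_left_mono)
  finally show ?thesis .
qed

lemma clip_id: "0 < K \<Longrightarrow> cmod z \<le> K \<Longrightarrow> clip K z = z"
  unfolding clip_def by (simp add: max_def)

lemma clip_diff: "0 < K \<Longrightarrow> cmod (z - clip K z) \<le> cmod z"
proof -
  assume K: "0 < K"
  have m: "0 < max K (cmod z)" using K by simp
  have r: "0 \<le> K / max K (cmod z)" "K / max K (cmod z) \<le> 1" using K m by (auto simp: divide_le_eq)
  have "z - clip K z = (1 - K / max K (cmod z)) *\<^sub>R z" unfolding clip_def by (simp add: algebra_simps)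
  hence "cmod (z - clip K z) = (1 - K / max K (cmod z)) * cmod z" using r by simp
  also have "\<dots> \<le> 1 * cmod z" using r by (intro mult_right_mono) auto
  finally show ?thesis by simp
qed

lemma clip_cont: "0 < K \<Longrightarrow> continuous_on UNIV (clip K)"
  unfolding clip_def by (intro continuous_intros) auto

lemma step1:
  assumes fL2: "L2_02pi f" and e: "0 < e"
  shows "\<exists>K>0. Nrm (\<lambda>t. f t - clip K (f t)) < ennreal e"
proof -
  have fm[measurable]: "f \<in> borel_measurable M0" and fN: "Nrm f < \<infinity>" using fL2 L2_iff by auto
  define u where "u i t = ennreal ((cmod (f t - clip (real (Suc i)) (f t)))\<^sup>2)" for i t
  have lim: "(\<lambda>i. \<integral>\<^sup>+t. u i t \<partial>M0) \<longlonglongrightarrow> (\<integral>\<^sup>+t. 0 \<partial>M0)"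
  proof (rule nn_integral_dominated_convergence[where w="\<lambda>t. ennreal ((cmod (f t))\<^sup>2)"])
    show "u i \<in> borel_measurable M0" for i unfolding u_def clip_def by measurable
    show "(\<lambda>t. 0) \<in> borel_measurable M0" by simp
    show "(\<lambda>t. ennreal ((cmod (f t))\<^sup>2)) \<in> borel_measurable M0" by measurable
    show "AE x in M0. u j x \<le> ennreal ((cmod (f x))\<^sup>2)" for j
      unfolding u_def by (intro AE_I2 ennreal_leI power_mono clip_diff) auto
    show "(\<integral>\<^sup>+x. ennreal ((cmod (f x))\<^sup>2) \<partial>M0) < \<infinity>" using fN unfolding Nrm_def .
    show "AE x in M0. (\<lambda>i. u i x) \<longlonglongrightarrow> 0"
    proof (rule AE_I2)
      fix x
      obtain N :: nat where N: "cmod (f x) \<le> real N" using real_arch_simple by blast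
      have "eventually (\<lambda>i. u i x = 0) sequentially"
      proof (rule eventually_sequentiallyI[of N])
        fix i assume "N \<le> i"
        hence "cmod (f x) \<le> real (Suc i)" using N by linarith
        thus "u i x = 0" unfolding u_def by (simp add: clip_id)
      qed
      thus "(\<lambda>i. u i x) \<longlonglongrightarrow> 0" by (rule tendsto_eventually)
    qed
  qed
  hence "eventually (\<lambda>i. (\<integral>\<^sup>+t. u i t \<partial>M0) < ennreal e) sequentially"
    using e by (intro order_tendstoD(2)) auto
  then obtain i where "(\<integral>\<^sup>+t. u i t \<partial>M0) < ennreal e"
    unfolding eventually_sequentially by blast
  hence "Nrm (\<lambda>t. f t - clip (real (Suc i)) (f t)) < ennreal e" unfolding Nrm_def u_def .
  moreover have "(0::real) < real (Suc i)" by simp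
  ultimately show ?thesis by blast
qed

definition cut :: "nat \<Rightarrow> real \<Rightarrow> real" where
  "cut n t = max 0 (min 1 (min (real (Suc n) * t - 1) (real (Suc n) * (2*pi - t) - 1)))"

lemma cut_range: "0 \<le> cut n t" "cut n t \<le> 1"
  unfolding cut_def by auto

lemma cut_cont: "continuous_on UNIV (cut n)"
  unfolding cut_def by (intro continuous_intros)

lemma cut_supp:
  assumes "t \<notin> {1 / real (Suc n) .. 2*pi - 1 / real (Suc n)}"
  shows "cut n t = 0"
proof -
  have "t < 1 / real (Suc n) \<or> 2*pi - 1 / real (Suc n) < t" using assms by auto
  hence "real (Suc n) * t < 1 \<or> real (Suc n) * (2*pi - t) < 1"
    by (auto simp: field_simps)
  thus ?thesis unfolding cut_def by auto
qed

lemma cut_lim: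
  assumes t: "t \<in> {0<..<2*pi}"
  shows "(\<lambda>n. cut n t) \<longlonglongrightarrow> 1"
proof -
  obtain N :: nat where N: "2 / t + 2 / (2*pi - t) \<le> real N" using real_arch_simple by blast
  have t1: "0 < t" "0 < 2*pi - t" using t by auto
  have "eventually (\<lambda>n. cut n t = 1) sequentially"
  proof (rule eventually_sequentiallyI[of N])
    fix n assume "N \<le> n"
    hence Nn: "real N \<le> real (Suc n)" by simp
    have d1: "0 \<le> 2 / (2*pi - t)" "0 \<le> 2 / t" using t1 by auto
    have "2 / t \<le> real (Suc n)" using N Nn d1 by linarith
    hence a: "2 \<le> real (Suc n) * t" using t1 by (simp add: divide_le_eq mult.commute)
    have "2 / (2*pi - t) \<le> real (Suc n)" using N Nn d1 by linarith
    hence b: "2 \<le> real (Suc n) * (2*pi - t)" using t1 by (simp add: divide_le_eq mult.commute)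
    show "cut n t = 1" unfolding cut_def using a b by auto
  qed
  thus ?thesis by (rule tendsto_eventually)
qed

lemma negl_AE:
  assumes "negligible N"
  shows "AE x in M0. x \<notin> N"
proof -
  have "N \<in> null_sets lebesgue" using assms negligible_iff_null_sets by blast
  hence "AE x in lebesgue. x \<notin> N" by (rule AE_not_in)
  hence "AE x in lebesgue. x \<in> S0 \<longrightarrow> x \<notin> N" by (rule eventually_mono) auto
  thus ?thesis by (subst AE_restrict_space_iff) auto
qed

lemma step2:
  assumes fL2: "L2_02pi f" and K: "0 < K" and e: "0 < e"
  shows "\<exists>g a b. continuous_on UNIV g \<and> 0 < a \<and> b < 2*pi \<and> (\<forall>t. t \<notin> {a..b} \<longrightarrow> g t = 0)
      \<and> Nrm (\<lambda>t. clip K (f t) - g t) < ennreal e"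
proof -
  have fm[measurable]: "f \<in> borel_measurable M0" using fL2 L2_iff by auto
  have "f measurable_on S0" using fm by (simp add: measurable_on_iff_borel_measurable)
  then obtain N g where N: "negligible N" and gc: "\<And>n. continuous_on UNIV (g n)"
    and gl: "\<And>x. x \<notin> N \<Longrightarrow> (\<lambda>n. g n x) \<longlonglongrightarrow> (if x \<in> S0 then f x else 0)"
    unfolding measurable_on_def by blast
  define G where "G n t = complex_of_real (cut n t) * clip K (g n t)" for n t
  have Gc: "continuous_on UNIV (G n)" for n
  proof -
    have "continuous_on UNIV (\<lambda>t. clip K (g n t))"
      using continuous_on_compose[OF gc[of n] continuous_on_subset[OF clip_cont[OF K]]]
      by (simp add: o_def)
    then show ?thesis unfolding G_def using cut_cont[of n]
      by (intro continuous_intros) auto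
  qed
  have Gm[measurable]: "G n \<in> borel_measurable M0" for n by (rule cont_meas[OF Gc])
  have cfm[measurable]: "(\<lambda>t. clip K (f t)) \<in> borel_measurable M0" unfolding clip_def by measurable
  have Gn: "cmod (G n t) \<le> K" for n t
  proof -
    have "cmod (G n t) = cut n t * cmod (clip K (g n t))" unfolding G_def using cut_range[of n t]
      by (simp add: norm_mult)
    also have "\<dots> \<le> 1 * K" using cut_range[of n t] clip_norm[OF K]
      by (intro mult_mono) auto
    finally show ?thesis by simp
  qed
  define u where "u n t = ennreal ((cmod (clip K (f t) - G n t))\<^sup>2)" for n t
  have lim: "(\<lambda>n. \<integral>\<^sup>+t. u n t \<partial>M0) \<longlonglongrightarrow> (\<integral>\<^sup>+t. 0 \<partial>M0)"
  proof (rule nn_integral_dominated_convergence[where w="\<lambda>t. ennreal ((2*K)\<^sup>2)"])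
    show "u i \<in> borel_measurable M0" for i unfolding u_def by measurable
    show "(\<lambda>t. 0) \<in> borel_measurable M0" by simp
    show "(\<lambda>t. ennreal ((2*K)\<^sup>2)) \<in> borel_measurable M0" by simp
    show "AE x in M0. u j x \<le> ennreal ((2*K)\<^sup>2)" for j
    proof (rule AE_I2)
      fix x
      have "cmod (clip K (f x) - G j x) \<le> cmod (clip K (f x)) + cmod (G j x)" by (rule norm_triangle_ineq4)
      also have "\<dots> \<le> 2 * K" using clip_norm[OF K, of "f x"] Gn[of j x] by simp
      finally have "(cmod (clip K (f x) - G j x))\<^sup>2 \<le> (2*K)\<^sup>2" by (intro power_mono) auto
      thus "u j x \<le> ennreal ((2*K)\<^sup>2)" unfolding u_def by (rule ennreal_leI)
    qed
    have "(\<integral>\<^sup>+x. ennreal ((2*K)\<^sup>2) \<partial>M0) = ennreal ((2*K)\<^sup>2) * emeasure M0 (space M0)" by simp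
    also have "emeasure M0 (space M0) = ennreal (2*pi)" by (simp add: emeasure_restrict_space)
    finally show "(\<integral>\<^sup>+x. ennreal ((2*K)\<^sup>2) \<partial>M0) < \<infinity>" by (simp add: ennreal_mult_less_top)
    show "AE x in M0. (\<lambda>i. u i x) \<longlonglongrightarrow> 0"
    proof -
      have "AE x in M0. x \<notin> N" by (rule negl_AE[OF N])
      moreover have "AE x in M0. x \<in> S0" by (rule AE_I2) simp
      ultimately show ?thesis
      proof eventually_elim
        case (elim x)
        have g1: "(\<lambda>n. g n x) \<longlonglongrightarrow> f x" using gl[OF elim(1)] elim(2) by simp
        have c1: "(\<lambda>n. clip K (g n x)) \<longlonglongrightarrow> clip K (f x)"
          by (rule isCont_tendsto_compose[OF _ g1])
             (use clip_cont[OF K] in \<open>simp add: continuous_on_eq_continuous_at\<close>)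
        have c2: "(\<lambda>n. complex_of_real (cut n x)) \<longlonglongrightarrow> complex_of_real 1"
          by (rule tendsto_of_real[OF cut_lim[OF elim(2)]])
        have "(\<lambda>n. G n x) \<longlonglongrightarrow> complex_of_real 1 * clip K (f x)"
          unfolding G_def by (rule tendsto_mult[OF c2 c1])
        hence "(\<lambda>n. clip K (f x) - G n x) \<longlonglongrightarrow> clip K (f x) - complex_of_real 1 * clip K (f x)"
          by (intro tendsto_diff tendsto_const)
        hence "(\<lambda>n. (cmod (clip K (f x) - G n x))\<^sup>2) \<longlonglongrightarrow> (cmod (clip K (f x) - complex_of_real 1 * clip K (f x)))\<^sup>2"
          by (intro tendsto_power tendsto_norm)
        hence "(\<lambda>n. (cmod (clip K (f x) - G n x))\<^sup>2) \<longlonglongrightarrow> 0" by simp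
        hence "(\<lambda>n. ennreal ((cmod (clip K (f x) - G n x))\<^sup>2)) \<longlonglongrightarrow> ennreal 0"
          by (rule tendsto_ennrealI)
        thus ?case unfolding u_def by simp
      qed
    qed
  qed
  hence "eventually (\<lambda>i. (\<integral>\<^sup>+t. u i t \<partial>M0) < ennreal e) sequentially"
    using e by (intro order_tendstoD(2)) auto
  then obtain n where "(\<integral>\<^sup>+t. u n t \<partial>M0) < ennreal e"
    unfolding eventually_sequentially by blast
  hence lt: "Nrm (\<lambda>t. clip K (f t) - G n t) < ennreal e" unfolding Nrm_def u_def .
  have supp: "\<forall>t. t \<notin> {1 / real (Suc n) .. 2*pi - 1 / real (Suc n)} \<longrightarrow> G n t = 0"
    unfolding G_def using cut_supp by simp
  have "0 < 1 / real (Suc n)" "2*pi - 1 / real (Suc n) < 2*pi" by auto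
  with Gc supp lt show ?thesis by blast
qed

lemma dense_cont:
  assumes fL2: "L2_02pi f" and e: "0 < e"
  shows "\<exists>g a b. continuous_on UNIV g \<and> 0 < a \<and> b < 2*pi \<and> (\<forall>t. t \<notin> {a..b} \<longrightarrow> g t = 0)
      \<and> Nrm (\<lambda>t. f t - g t) < ennreal e"
proof -
  have fm[measurable]: "f \<in> borel_measurable M0" using fL2 L2_iff by auto
  obtain K where K: "0 < K" and n1: "Nrm (\<lambda>t. f t - clip K (f t)) < ennreal (e/4)"
    using step1[OF fL2, of "e/4"] e by auto
  obtain g a b where gc: "continuous_on UNIV g" and ab: "0 < a" "b < 2*pi"
    and supp: "\<forall>t. t \<notin> {a..b} \<longrightarrow> g t = 0" and n2: "Nrm (\<lambda>t. clip K (f t) - g t) < ennreal (e/4)"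
  proof -
    have e4: "0 < e/4" using e by simp
    show ?thesis using step2[OF fL2 K e4] by (elim exE conjE) (rule that; assumption)
  qed
  have cfm[measurable]: "(\<lambda>t. clip K (f t)) \<in> borel_measurable M0" unfolding clip_def by measurable
  have gm[measurable]: "g \<in> borel_measurable M0" by (rule cont_meas[OF gc])
  have "Nrm (\<lambda>t. f t - g t) \<le> 2 * Nrm (\<lambda>t. f t - clip K (f t)) + 2 * Nrm (\<lambda>t. clip K (f t) - g t)"
    by (rule nrm_tri) measurable
  also have "\<dots> < ennreal (e/2 + e/2)"
  proof (rule add_mono_ennreal)
    have "2 * Nrm (\<lambda>t. f t - clip K (f t)) < 2 * ennreal (e/4)"
      by (rule ennreal_mult_strict_left_mono[OF n1]) simp_all
    also have "2 * ennreal (e/4) = ennreal (e/2)" using e by (simp flip: ennreal_numeral add: ennreal_mult[symmetric])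
    finally show "2 * Nrm (\<lambda>t. f t - clip K (f t)) < ennreal (e/2)" .
    have "2 * Nrm (\<lambda>t. clip K (f t) - g t) < 2 * ennreal (e/4)"
      by (rule ennreal_mult_strict_left_mono[OF n2]) simp_all
    also have "2 * ennreal (e/4) = ennreal (e/2)" using e by (simp flip: ennreal_numeral add: ennreal_mult[symmetric])
    finally show "2 * Nrm (\<lambda>t. clip K (f t) - g t) < ennreal (e/2)" .
  qed
  also have "e/2 + e/2 = e" by simp
  finally show ?thesis using gc ab supp by blast
qed

lemma exp_complete:
  assumes fL2: "L2_02pi f" and e: "0 < e"
  shows "\<exists>F c. finite F \<and> Nrm (\<lambda>t. f t - (\<Sum>n\<in>F. c n * exp (\<i> * complex_of_real (of_int n * t)))) < ennreal e"
proof -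
  have fm[measurable]: "f \<in> borel_measurable M0" using fL2 L2_iff by auto
  obtain g a b where gc: "continuous_on UNIV g" and a: "0 < a" and b: "b < 2*pi"
    and supp: "\<forall>t. t \<notin> {a..b} \<longrightarrow> g t = 0" and fg: "Nrm (\<lambda>t. f t - g t) < ennreal (e/4)"
    using dense_cont[OF fL2, of "e/4"] e by auto
  define \<delta> where "\<delta> = min 1 (e / (16*pi))"
  have d0: "0 < \<delta>" unfolding \<delta>_def using e by simp
  obtain p where TPp: "TP p" and pa: "\<forall>t\<in>S0. cmod (g t - p t) < \<delta>"
    using trig_approx[OF gc a b _ d0] supp by blast
  obtain F c where F: "finite F" and pF: "\<forall>t. p t = (\<Sum>n\<in>F. c n * ee n t)"
    using TP_extract[OF TPp] by blast
  have pe: "p = (\<lambda>t. \<Sum>n\<in>F. c n * exp (\<i> * complex_of_real (of_int n * t)))"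
    using pF unfolding ee_def by auto
  have pc: "continuous_on UNIV p" unfolding pe by (intro continuous_intros)
  have gm[measurable]: "g \<in> borel_measurable M0" by (rule cont_meas[OF gc])
  have pm[measurable]: "p \<in> borel_measurable M0" by (rule cont_meas[OF pc])
  have "Nrm (\<lambda>t. g t - p t) \<le> ennreal (\<delta>\<^sup>2 * (2*pi))"
    by (rule sup_bound) (use pa in \<open>auto intro: less_imp_le\<close>)
  also have "\<delta>\<^sup>2 * (2*pi) \<le> e/8"
  proof -
    have d1: "\<delta> \<le> 1" unfolding \<delta>_def by simp
    have "\<delta> * \<delta> \<le> 1 * \<delta>" using d0 d1 by (intro mult_right_mono) auto
    hence "\<delta>\<^sup>2 \<le> \<delta>" by (simp add: power2_eq_square)
    moreover have "\<delta> \<le> e / (16*pi)" unfolding \<delta>_def by simp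
    ultimately have "\<delta>\<^sup>2 \<le> e / (16*pi)" by linarith
    hence "\<delta>\<^sup>2 * (2*pi) \<le> e / (16*pi) * (2*pi)" by (rule mult_right_mono) simp
    also have "\<dots> = e/8" by (simp add: field_simps)
    finally show ?thesis .
  qed
  hence "ennreal (\<delta>\<^sup>2 * (2*pi)) \<le> ennreal (e/8)" by (rule ennreal_leI)
  finally have gp: "Nrm (\<lambda>t. g t - p t) \<le> ennreal (e/8)" .
  have "Nrm (\<lambda>t. f t - p t) \<le> 2 * Nrm (\<lambda>t. f t - g t) + 2 * Nrm (\<lambda>t. g t - p t)"
    by (rule nrm_tri) measurable
  also have "\<dots> < ennreal (e/2 + e/2)"
  proof (rule add_mono_ennreal)
    have "2 * Nrm (\<lambda>t. f t - g t) < 2 * ennreal (e/4)"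
      by (rule ennreal_mult_strict_left_mono[OF fg]) simp_all
    also have "2 * ennreal (e/4) = ennreal (e/2)" using e by (simp flip: ennreal_numeral add: ennreal_mult[symmetric])
    finally show "2 * Nrm (\<lambda>t. f t - g t) < ennreal (e/2)" .
    have "2 * Nrm (\<lambda>t. g t - p t) \<le> 2 * ennreal (e/8)"
      by (rule mult_left_mono[OF gp]) simp
    also have "2 * ennreal (e/8) = ennreal (e/4)" using e by (simp flip: ennreal_numeral add: ennreal_mult[symmetric])
    also have "\<dots> < ennreal (e/2)" using e by (subst ennreal_less_iff) auto
    finally show "2 * Nrm (\<lambda>t. g t - p t) < ennreal (e/2)" .
  qed
  also have "e/2 + e/2 = e" by simp
  finally show ?thesis using F unfolding pe by blast
qed

lemma cmod_exp_i: "cmod (exp (\<i> * complex_of_real x)) = 1"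
  by (simp add: norm_exp_i_times)

lemma shift_complete:
  fixes \<beta> :: real
  assumes fL2: "L2_02pi f" and e: "0 < e"
  shows "\<exists>F c. finite F \<and> Nrm (\<lambda>t. f t - (\<Sum>n\<in>F. c n * exp (\<i> * complex_of_real ((of_int n + \<beta>) * t)))) < ennreal e"
proof -
  have fm[measurable]: "f \<in> borel_measurable M0" and fN: "Nrm f < \<infinity>" using fL2 L2_iff by auto
  define w where "w t = exp (\<i> * complex_of_real (\<beta> * t))" for t
  have wc: "continuous_on UNIV w" unfolding w_def by (intro continuous_intros)
  have wm[measurable]: "w \<in> borel_measurable M0" by (rule cont_meas[OF wc])
  have wn: "cmod (w t) = 1" for t unfolding w_def by (rule cmod_exp_i)
  define g where "g t = f t / w t" for t
  have gm[measurable]: "g \<in> borel_measurable M0" unfolding g_def by measurable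
  have "Nrm g = Nrm f" unfolding Nrm_def g_def by (simp add: norm_divide wn)
  hence gL2: "L2_02pi g" using gm fN L2_iff by simp
  obtain F c where F: "finite F"
    and lt: "Nrm (\<lambda>t. g t - (\<Sum>n\<in>F. c n * exp (\<i> * complex_of_real (of_int n * t)))) < ennreal e"
    using exp_complete[OF gL2 e] by blast
  have eq: "cmod (f t - (\<Sum>n\<in>F. c n * exp (\<i> * complex_of_real ((of_int n + \<beta>) * t))))
      = cmod (g t - (\<Sum>n\<in>F. c n * exp (\<i> * complex_of_real (of_int n * t))))" for t
  proof -
    have w0: "w t \<noteq> 0" using wn[of t] by auto
    have "exp (\<i> * complex_of_real ((of_int n + \<beta>) * t)) = w t * exp (\<i> * complex_of_real (of_int n * t))" for n
      unfolding w_def by (simp add: exp_add[symmetric] algebra_simps)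
    hence "f t - (\<Sum>n\<in>F. c n * exp (\<i> * complex_of_real ((of_int n + \<beta>) * t)))
       = w t * (g t - (\<Sum>n\<in>F. c n * exp (\<i> * complex_of_real (of_int n * t))))"
      unfolding g_def using w0 by (simp add: sum_distrib_left algebra_simps)
    thus ?thesis by (simp add: norm_mult wn)
  qed
  have N: "Nrm (\<lambda>t. f t - (\<Sum>n\<in>F. c n * exp (\<i> * complex_of_real ((of_int n + \<beta>) * t))))
     = Nrm (\<lambda>t. g t - (\<Sum>n\<in>F. c n * exp (\<i> * complex_of_real (of_int n * t))))"
    unfolding Nrm_def by (simp only: eq)
  show ?thesis by (intro exI[of _ F] exI[of _ c]) (simp only: F N lt simp_thms)
qed

theorem lemma3:
  fixes \<beta> :: real
  assumes "0 < \<beta>" and "\<beta> < 1/2"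
  shows "complete_L2_02pi (\<lambda>n t. complex_of_real (sin ((of_int n + \<beta>) * t)))
       \<and> complete_L2_02pi (\<lambda>n t. complex_of_real (cos ((of_int n + \<beta>) * t)))"
proof -
  define u where "u n t = exp (\<i> * complex_of_real ((of_int n + \<beta>) * t))" for n :: int and t :: real
  define d where "d = exp (- (\<i> * complex_of_real (2 * pi * \<beta>)))"
  have usys: "\<And>f e. L2_02pi f \<Longrightarrow> e > 0 \<Longrightarrow>
      \<exists>F c. finite F \<and> Nrm (\<lambda>t. f t - (\<Sum>n\<in>F. c n * u n t)) < ennreal e"
    unfolding u_def by (rule shift_complete)
  have ucont: "continuous_on UNIV (u n)" for n unfolding u_def by (intro continuous_intros)
  have dn: "cmod d = 1" unfolding d_def using cmod_exp_i[of "- (2 * pi * \<beta>)"] by simp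
  have dsq: "d\<^sup>2 \<noteq> 1"
  proof
    assume "d\<^sup>2 = 1"
    hence "exp (- (\<i> * complex_of_real (4 * pi * \<beta>))) = 1"
      unfolding d_def by (simp add: power2_eq_square exp_add[symmetric] mult_ac)
    then obtain m :: int where "- (4 * pi * \<beta>) = of_int (2 * m) * pi"
      unfolding exp_eq_1 by auto
    hence "pi * (- (2 * \<beta>)) = pi * of_int m" by (simp add: algebra_simps)
    hence "- (2 * \<beta>) = of_int m" using pi_gt_zero by (metis mult_cancel_left pi_neq_zero)
    hence "(-1::real) < of_int m \<and> of_int m < (0::real)" using assms by linarith
    hence "-1 < m \<and> m < 0" by linarith
    thus False by presburger
  qed
  have key: "d * u n (2*pi - t) = exp (- (\<i> * complex_of_real ((of_int n + \<beta>) * t)))" for n t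
  proof -
    have "d * u n (2*pi - t) = exp ((2 * of_int n * pi) * \<i>) * exp (- (\<i> * complex_of_real ((of_int n + \<beta>) * t)))"
      unfolding d_def u_def exp_add[symmetric] by (rule arg_cong[where f=exp]) (simp add: algebra_simps)
    also have "exp ((2 * of_int n * pi) * \<i>) = 1" by (rule exp_integer_2pi) simp
    finally show ?thesis by simp
  qed
  have S: "complete_L2_02pi (\<lambda>n t. complex_of_real (sin ((of_int n + \<beta>) * t)))"
  proof (rule refl_system[OF usys ucont, of "-d" "2*\<i>"])
    show "cmod (- d) = 1" using dn by simp
    show "(- d)\<^sup>2 \<noteq> 1" using dsq by simp
    show "2 * \<i> \<noteq> 0" by simp
    fix n t
    show "complex_of_real (sin ((of_int n + \<beta>) * t)) = (u n t + - d * u n (2 * pi - t)) / (2 * \<i>)"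
      using key[of n t] unfolding sin_of_real[symmetric] sin_exp_eq u_def by simp
  qed
  have C: "complete_L2_02pi (\<lambda>n t. complex_of_real (cos ((of_int n + \<beta>) * t)))"
  proof (rule refl_system[OF usys ucont, of "d" "2"])
    show "cmod d = 1" using dn by simp
    show "d\<^sup>2 \<noteq> 1" using dsq by simp
    show "(2::complex) \<noteq> 0" by simp
    fix n t
    show "complex_of_real (cos ((of_int n + \<beta>) * t)) = (u n t + d * u n (2 * pi - t)) / 2"
      using key[of n t] unfolding cos_of_real[symmetric] cos_exp_eq u_def by simp
  qed
  show ?thesis using S C by blast
qed

end
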